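(* Let $M(C,\bar\xi,\pi)$ be a Myller configuration with Darboux frame $(\bar\xi,\bar\mu,\bar v)$ and invariants $G,K,T$, with $(T(s),K(s))\neq(0,0)$ for all $s$. Define $$\sigma_v=\frac{K^{2}\left(\frac{T}{K}\right)'+(T^{2}+K^{2})G}{(T^{2}+K^{2})^{3/2}},$$ where $K^2\left(\frac{T}{K}\right)'$ stands for $T'K-TK'$. Then $C$ is a $\bar v$-helix in $M$ if and only if $\sigma_v$ is constant; in that case the constant angle $\omega$ between $\bar v$ and the axis satisfies $\cot\omega=\mp\sigma_v$ (for an appropriate sign).
   Context: Let $C$ be a smooth curve in $E^3$ parametrized by arclength $s$; primes denote $d/ds$. A Myller configuration $M(C,\bar\xi,\pi)$ consists of a smooth unit vector field $\bar\xi$ along $C$ and a smooth oriented plane field $\pi$ with $\bar\xi\in\pi$; $\bar v$ is the unit normal of $\pi$, $\bar\mu=\bar v\times\bar\xi$, and the Darboux frame satisfies $\bar\xi'=G\bar\mu+K\bar v$, $\bar\mu'=-G\bar\xi+T\bar v$, $\bar v'=-K\bar\xi-T\bar\mu$. $C$ is a $\bar v$-helix in $M$ if there are a constant unit vector $\bar d_v$ and a constant $\omega$ with $\langle\bar v,\bar d_v\rangle=\cos\omega$ along $C$. *)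

theory Defs
  imports "HOL-Analysis.Analysis"
begin

text \<open>Myller configuration along a curve C over the parameter set I (arclength s):
  unit field xi, unit normal v of the plane field, mu = v x xi, and the Darboux
  frame equations with invariants G, K, T.\<close>
definition myller_config ::
  "real set \<Rightarrow> (real \<Rightarrow> real^3) \<Rightarrow> (real \<Rightarrow> real^3) \<Rightarrow> (real \<Rightarrow> real^3) \<Rightarrow> (real \<Rightarrow> real^3)
   \<Rightarrow> (real \<Rightarrow> real) \<Rightarrow> (real \<Rightarrow> real) \<Rightarrow> (real \<Rightarrow> real) \<Rightarrow> bool" where
  "myller_config I C xi mu v G K T \<longleftrightarrow>
     (\<forall>s\<in>I.
        (\<exists>C'. (C has_vector_derivative C') (at s) \<and> norm C' = 1) \<and>
        norm (xi s) = 1 \<and> norm (v s) = 1 \<and> xi s \<bullet> v s = 0 \<and>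
        mu s = cross3 (v s) (xi s) \<and>
        (xi has_vector_derivative (G s *\<^sub>R mu s + K s *\<^sub>R v s)) (at s) \<and>
        (mu has_vector_derivative (- G s *\<^sub>R xi s + T s *\<^sub>R v s)) (at s) \<and>
        (v has_vector_derivative (- K s *\<^sub>R xi s - T s *\<^sub>R mu s)) (at s))"

definition v_helix_with :: "real set \<Rightarrow> (real \<Rightarrow> real^3) \<Rightarrow> real^3 \<Rightarrow> real \<Rightarrow> bool" where
  "v_helix_with I v d \<omega> \<longleftrightarrow> norm d = 1 \<and> (\<forall>s\<in>I. v s \<bullet> d = cos \<omega>)"

definition v_helix :: "real set \<Rightarrow> (real \<Rightarrow> real^3) \<Rightarrow> bool" where
  "v_helix I v \<longleftrightarrow> (\<exists>d \<omega>. v_helix_with I v d \<omega>)"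

definition sigma_v :: "(real \<Rightarrow> real) \<Rightarrow> (real \<Rightarrow> real) \<Rightarrow> (real \<Rightarrow> real) \<Rightarrow> real \<Rightarrow> real" where
  "sigma_v G K T s =
     (deriv T s * K s - T s * deriv K s + ((T s)^2 + (K s)^2) * G s)
       / ((T s)^2 + (K s)^2) powr (3/2)"

end

theory Submission
  imports Defs
begin

lemma cross_cross_l: "cross3 (cross3 a b) c = (a \<bullet> c) *\<^sub>R b - (b \<bullet> c) *\<^sub>R a"
  using exhaust_3 by (force simp add: cross3_simps)

lemma frame_basic:
  fixes xi v d :: "real^3"
  assumes "norm xi = 1" "norm v = 1" "xi \<bullet> v = 0"
  shows "norm (cross3 v xi) = 1" "cross3 v xi \<bullet> xi = 0" "cross3 v xi \<bullet> v = 0"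
        "xi \<bullet> cross3 v xi = 0" "v \<bullet> cross3 v xi = 0"
proof -
  have "(norm (cross3 v xi))\<^sup>2 + (v \<bullet> xi)\<^sup>2 = (norm v * norm xi)\<^sup>2" by (rule norm_cross_dot)
  then have "(norm (cross3 v xi))\<^sup>2 = 1" using assms by (simp add: inner_commute)
  then show "norm (cross3 v xi) = 1" by (smt (verit) norm_ge_zero power2_eq_1_iff)
  show "cross3 v xi \<bullet> xi = 0" "cross3 v xi \<bullet> v = 0" "xi \<bullet> cross3 v xi = 0" "v \<bullet> cross3 v xi = 0"
    using dot_cross_self by (auto simp: inner_commute)
qed

lemma parseval:
  fixes xi v d :: "real^3"
  assumes "norm xi = 1" "norm v = 1" "xi \<bullet> v = 0"
  shows "(d \<bullet> xi)\<^sup>2 + (d \<bullet> cross3 v xi)\<^sup>2 + (d \<bullet> v)\<^sup>2 = (norm d)\<^sup>2"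
proof -
  define mu where "mu = cross3 v xi"
  note fb = frame_basic[OF assms, folded mu_def]
  have xx: "xi \<bullet> xi = 1" "v \<bullet> v = 1" "mu \<bullet> mu = 1" using assms fb
    by (simp_all add: dot_square_norm)
  define e where "e = d - ((d \<bullet> xi) *\<^sub>R xi + (d \<bullet> mu) *\<^sub>R mu + (d \<bullet> v) *\<^sub>R v)"
  have e1: "xi \<bullet> e = 0" "v \<bullet> e = 0" "mu \<bullet> e = 0"
    using xx fb assms unfolding e_def by (simp_all add: inner_diff_right inner_add_right inner_commute)
  have "cross3 mu e = 0" unfolding mu_def cross_cross_l using e1 by simp
  moreover have "(norm (cross3 mu e))\<^sup>2 + (mu \<bullet> e)\<^sup>2 = (norm mu * norm e)\<^sup>2" by (rule norm_cross_dot)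
  ultimately have "e = 0" using fb e1 by (simp add: mu_def)
  then have dd: "d = (d \<bullet> xi) *\<^sub>R xi + (d \<bullet> mu) *\<^sub>R mu + (d \<bullet> v) *\<^sub>R v" unfolding e_def by simp
  have "(norm d)\<^sup>2 = d \<bullet> d" by (simp add: power2_norm_eq_inner)
  also have "\<dots> = d \<bullet> ((d \<bullet> xi) *\<^sub>R xi + (d \<bullet> mu) *\<^sub>R mu + (d \<bullet> v) *\<^sub>R v)" using dd by metis
  also have "\<dots> = (d \<bullet> xi)\<^sup>2 + (d \<bullet> mu)\<^sup>2 + (d \<bullet> v)\<^sup>2"
    by (simp add: inner_add_right power2_eq_square)
  finally show ?thesis unfolding mu_def by simp
qed

lemma inner_const_deriv:
  fixes f :: "real \<Rightarrow> real^3"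
  assumes "(f has_vector_derivative f') (at s)"
  shows "((\<lambda>t. f t \<bullet> d) has_real_derivative (f' \<bullet> d)) (at s)"
  using bounded_linear.has_vector_derivative[OF bounded_linear_inner_left assms, of d]
  by (simp add: has_real_derivative_iff_has_vector_derivative)

lemma powr32: "(x::real) > 0 \<Longrightarrow> x powr (3/2) = x * sqrt x"
proof -
  assume "x > 0"
  have "x powr (3/2) = x powr (1 + 1/2)" by simp
  also have "\<dots> = x powr 1 * x powr (1/2)" by (rule powr_add)
  also have "\<dots> = x * x powr (1/2)" using \<open>x>0\<close> by simp
  finally show ?thesis using \<open>x>0\<close> by (simp add: powr_half_sqrt)
qed

lemma fwd_alg:
  fixes a b c K T K' T' G N \<rho> :: real
  assumes h1: "K*a + T*b = 0"
    and h2: "K'*a + K*(G*b + K*c) + T'*b + T*(-G*a + T*c) = 0"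
    and rho: "\<rho> = T^2 + K^2" "\<rho> > 0"
    and N: "N = T'*K - T*K' + \<rho>*G"
  shows "c * \<rho>^2 = (a*T - b*K) * N" "(a*T - b*K)^2 = (a^2+b^2)*\<rho>"
proof -
  have e1: "c*\<rho> = -(a*K' + b*T') + G*(T*a - K*b)" using h2 rho by (simp add: algebra_simps power2_eq_square)
  have e2: "-\<rho>*(a*K'+b*T') = (a*T-b*K)*(T'*K-T*K')"
  proof -
    have "(a*T-b*K)*(T'*K-T*K') = T*T'*(a*K) - a*T^2*K' - b*K^2*T' + K*K'*(b*T)" by (simp add: algebra_simps power2_eq_square)
    also have "\<dots> = -T*T'*(T*b) - a*T^2*K' - b*K^2*T' - K*K'*(K*a)"
    proof -
      have "a*K = -(T*b)" "b*T = -(K*a)" using h1 by (simp_all add: algebra_simps)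
      then show ?thesis by simp
    qed
    finally show ?thesis using rho by (simp add: algebra_simps power2_eq_square)
  qed
  have "c*\<rho>^2 = \<rho>*(c*\<rho>)" by (simp add: power2_eq_square)
  also have "\<dots> = -\<rho>*(a*K'+b*T') + \<rho>*G*(T*a-K*b)"
    using arg_cong[OF e1, of "\<lambda>z. \<rho>*z"] by (simp add: algebra_simps)
  also have "\<dots> = (a*T-b*K)*(T'*K-T*K') + (a*T-b*K)*\<rho>*G" unfolding e2 by (simp add: algebra_simps)
  also have "\<dots> = (a*T - b*K) * N" unfolding N by (simp add: algebra_simps)
  finally show "c * \<rho>^2 = (a*T - b*K) * N" .
  have "(a*T - b*K)^2 + (a*K+b*T)^2 = (a^2+b^2)*\<rho>" using rho by (simp add: algebra_simps power2_eq_square)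
  then show "(a*T - b*K)^2 = (a^2+b^2)*\<rho>" using h1 by (simp add: algebra_simps)
qed


lemma deriv_val: "(f has_field_derivative X) F \<Longrightarrow> X = Y \<Longrightarrow> (f has_field_derivative Y) F"
  by simp

lemma vderiv_val: "(f has_vector_derivative X) F \<Longrightarrow> X = Y \<Longrightarrow> (f has_vector_derivative Y) F"
  by simp

lemma bwd_alg:
  fixes r T K T' K' G \<sigma> :: real
  assumes r: "r > 0" "r*r = T^2+K^2" and s: "\<sigma> * (r*r*r) = T'*K - T*K' + r*r*G"
  shows "(T'*r - T*((T*T'+K*K')/r))/(r*r) + K/r*G - \<sigma>*K = 0"
    and "T/r*G - (K'*r - K*((T*T'+K*K')/r))/(r*r) - \<sigma>*T = 0"
proof -
  have "((T'*r - T*((T*T'+K*K')/r))/(r*r) + K/r*G - \<sigma>*K) * (r*r*r)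
       = T'*(r*r) - T*(T*T'+K*K') + K*G*(r*r) - K*(\<sigma>*(r*r*r))"
    using r(1) by (simp add: field_simps)
  also have "\<dots> = 0" unfolding s by (simp only: r(2)) (simp add: algebra_simps power2_eq_square)
  finally show "(T'*r - T*((T*T'+K*K')/r))/(r*r) + K/r*G - \<sigma>*K = 0" using r(1) by simp
  have "(T/r*G - (K'*r - K*((T*T'+K*K')/r))/(r*r) - \<sigma>*T) * (r*r*r)
       = T*G*(r*r) - K'*(r*r) + K*(T*T'+K*K') - T*(\<sigma>*(r*r*r))"
    using r(1) by (simp add: field_simps)
  also have "\<dots> = 0" unfolding s by (simp only: r(2)) (simp add: algebra_simps power2_eq_square)
  finally show "T/r*G - (K'*r - K*((T*T'+K*K')/r))/(r*r) - \<sigma>*T = 0" using r(1) by simp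
qed

theorem theorem24:
  fixes I :: "real set" and C xi mu v :: "real \<Rightarrow> real^3" and G K T :: "real \<Rightarrow> real"
  assumes "open I" and "is_interval I" and "I \<noteq> {}"
    and "myller_config I C xi mu v G K T"
    and "\<forall>s\<in>I. T differentiable (at s) \<and> K differentiable (at s)"
    and "\<forall>s\<in>I. (T s, K s) \<noteq> (0, 0)"
  shows "(v_helix I v \<longleftrightarrow> (\<exists>c. \<forall>s\<in>I. sigma_v G K T s = c))
    \<and> (\<forall>d \<omega>. v_helix_with I v d \<omega> \<longrightarrow>
          (\<forall>s\<in>I. cot \<omega> = sigma_v G K T s) \<or> (\<forall>s\<in>I. cot \<omega> = - sigma_v G K T s))"
proof -
  have fr: "norm (xi s) = 1 \<and> norm (v s) = 1 \<and> xi s \<bullet> v s = 0 \<and> mu s = cross3 (v s) (xi s) \<and>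
        (xi has_vector_derivative (G s *\<^sub>R mu s + K s *\<^sub>R v s)) (at s) \<and>
        (mu has_vector_derivative (- G s *\<^sub>R xi s + T s *\<^sub>R v s)) (at s) \<and>
        (v has_vector_derivative (- K s *\<^sub>R xi s - T s *\<^sub>R mu s)) (at s)" if "s \<in> I" for s
    using assms(4) that unfolding myller_config_def by blast
  have orth: "norm (mu s) = 1 \<and> mu s \<bullet> xi s = 0 \<and> mu s \<bullet> v s = 0 \<and> xi s \<bullet> mu s = 0 \<and> v s \<bullet> mu s = 0"
    if "s \<in> I" for s
    using frame_basic[of "xi s" "v s"] fr[OF that] by simp
  have dT: "(T has_real_derivative deriv T s) (at s)" if "s \<in> I" for s
    using assms(5) that DERIV_deriv_iff_real_differentiable by blast
  have dK: "(K has_real_derivative deriv K s) (at s)" if "s \<in> I" for s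
    using assms(5) that DERIV_deriv_iff_real_differentiable by blast
  define \<rho> where "\<rho> = (\<lambda>s. (T s)^2 + (K s)^2)"
  have rpos: "\<rho> s > 0" if "s \<in> I" for s
    using assms(6) that unfolding \<rho>_def by (auto simp: sum_power2_gt_zero_iff)
  define N where "N = (\<lambda>s. deriv T s * K s - T s * deriv K s + \<rho> s * G s)"
  have sig: "sigma_v G K T s = N s / (\<rho> s * sqrt (\<rho> s))" if "s \<in> I" for s
    unfolding sigma_v_def using powr32[OF rpos[OF that]] by (simp add: \<rho>_def N_def)
  have conn: "connected I" using assms(2) is_interval_connected by blast
  have fwd: "(\<forall>s\<in>I. cot \<omega> = sigma_v G K T s) \<or> (\<forall>s\<in>I. cot \<omega> = - sigma_v G K T s)"
    if H: "v_helix_with I v d \<omega>" for d \<omega>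
  proof -
    from H have nd: "norm d = 1" and vd: "\<forall>s\<in>I. v s \<bullet> d = cos \<omega>" by (auto simp: v_helix_with_def)
    define a where "a = (\<lambda>s. xi s \<bullet> d)"
    define b where "b = (\<lambda>s. mu s \<bullet> d)"
    have h1: "K s * a s + T s * b s = 0" if s: "s \<in> I" for s
    proof -
      have D1: "((\<lambda>t. v t \<bullet> d) has_real_derivative ((- K s *\<^sub>R xi s - T s *\<^sub>R mu s) \<bullet> d)) (at s)"
        using inner_const_deriv fr[OF s] by blast
      have D2: "((\<lambda>t. v t \<bullet> d) has_real_derivative 0) (at s)"
        by (rule has_field_derivative_transform_within_open[OF DERIV_const[of "cos \<omega>"] assms(1) s]) (use vd in auto)
      have "(- K s *\<^sub>R xi s - T s *\<^sub>R mu s) \<bullet> d = 0" using DERIV_unique[OF D1 D2] .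
      then show ?thesis by (simp add: a_def b_def inner_diff_left algebra_simps)
    qed
    have h2: "deriv K s * a s + K s * (G s * b s + K s * cos \<omega>) + deriv T s * b s
              + T s * (- G s * a s + T s * cos \<omega>) = 0" if s: "s \<in> I" for s
    proof -
      have da: "(a has_real_derivative (G s * b s + K s * cos \<omega>)) (at s)"
        unfolding a_def
        by (rule deriv_val[OF inner_const_deriv[of xi _ s d]]) 
           (use fr[OF s] vd s in \<open>auto simp: b_def inner_add_left\<close>)
      have db: "(b has_real_derivative (- G s * a s + T s * cos \<omega>)) (at s)"
        unfolding b_def
        by (rule deriv_val[OF inner_const_deriv[of mu _ s d]]) 
           (use fr[OF s] vd s in \<open>auto simp: a_def inner_add_left inner_diff_left\<close>)
      have DF: "((\<lambda>t. K t * a t + T t * b t) has_real_derivative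
          (deriv K s * a s + (G s * b s + K s * cos \<omega>) * K s) + (deriv T s * b s + (- G s * a s + T s * cos \<omega>) * T s)) (at s)"
        by (intro DERIV_add DERIV_mult dK[OF s] dT[OF s] da db)
      have D0: "((\<lambda>t. K t * a t + T t * b t) has_real_derivative 0) (at s)"
        by (rule has_field_derivative_transform_within_open[OF DERIV_const[of 0] assms(1) s]) (use h1 in auto)
      show ?thesis using DERIV_unique[OF DF D0] by (simp add: algebra_simps)
    qed
    define m where "m = (\<lambda>s. (a s * T s - b s * K s) / sqrt (\<rho> s))"
    have key: "(m s)^2 = (sin \<omega>)^2 \<and> cos \<omega> = m s * sigma_v G K T s" if s: "s \<in> I" for s
    proof -
      have par: "(a s)^2 + (b s)^2 + (cos \<omega>)^2 = 1"
        using parseval[of "xi s" "v s" d] fr[OF s] nd vd s by (simp add: a_def b_def inner_commute)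
      note alg = fwd_alg[OF h1[OF s] h2[OF s] \<rho>_def[THEN fun_cong] rpos[OF s] N_def[THEN fun_cong]]
      have r2: "sqrt (\<rho> s) * sqrt (\<rho> s) = \<rho> s" using rpos[OF s] by simp
      have rp: "sqrt (\<rho> s) > 0" using rpos[OF s] by simp
      have "(m s)^2 = (a s * T s - b s * K s)^2 / \<rho> s"
        unfolding m_def using rpos[OF s] by (simp add: power_divide)
      also have "\<dots> = (a s)^2 + (b s)^2" using alg(2) rpos[OF s] by simp
      also have "\<dots> = (sin \<omega>)^2" using par sin_cos_squared_add[of \<omega>] by linarith
      finally have 1: "(m s)^2 = (sin \<omega>)^2" .
      have "m s * sigma_v G K T s = (a s * T s - b s * K s) * N s / (\<rho> s * (sqrt (\<rho> s) * sqrt (\<rho> s)))"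
        unfolding m_def sig[OF s] using rp by (simp add: field_simps)
      also have "\<dots> = cos \<omega>" unfolding r2 using alg(1) rpos[OF s]
        by (simp add: field_simps power2_eq_square)
      finally show ?thesis using 1 by simp
    qed
    obtain s0 where s0: "s0 \<in> I" using assms(3) by blast
    have sn: "sin \<omega> \<noteq> 0"
    proof
      assume "sin \<omega> = 0"
      then have "m s0 = 0" using key[OF s0] by simp
      then have "cos \<omega> = 0" using key[OF s0] by simp
      then show False using \<open>sin \<omega> = 0\<close> sin_cos_squared_add[of \<omega>] by simp
    qed
    define e where "e = (\<lambda>s. m s / sin \<omega>)"
    have e2: "e s = 1 \<or> e s = -1" if s: "s \<in> I" for s
    proof -
      have "(e s)^2 = 1" unfolding e_def using key[OF s] sn by (simp add: power_divide)
      then show ?thesis by (simp add: power2_eq_1_iff)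
    qed
    have ce: "cot \<omega> = e s * sigma_v G K T s" if s: "s \<in> I" for s
      unfolding cot_def e_def using key[OF s] sn by (simp add: field_simps)
    have contm: "continuous_on I e"
    proof (rule continuous_at_imp_continuous_on, rule ballI)
      fix s assume s: "s \<in> I"
      have c1: "isCont xi s" "isCont mu s" using fr[OF s] has_vector_derivative_continuous by blast+
      have c2: "isCont T s" "isCont K s" using dT[OF s] dK[OF s] DERIV_isCont by blast+
      show "isCont e s" unfolding e_def m_def a_def b_def \<rho>_def
        using c1 c2 rpos[OF s] sn unfolding \<rho>_def
        by (intro continuous_intros) auto
    qed
    have "e constant_on I"
    proof (rule continuous_discrete_range_constant[OF conn contm])
      fix x assume x: "x \<in> I"
      show "\<exists>e'>0. \<forall>y. y \<in> I \<and> e y \<noteq> e x \<longrightarrow> e' \<le> norm (e y - e x)"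
      proof (intro exI[of _ 1] conjI allI impI)
        fix y assume y: "y \<in> I \<and> e y \<noteq> e x"
        then show "1 \<le> norm (e y - e x)" using e2[OF x] e2[of y] by auto
      qed simp
    qed
    then have ec: "e s = e s0" if "s \<in> I" for s using that s0 unfolding constant_on_def by metis
    show ?thesis
    proof (cases "e s0 = 1")
      case True
      then show ?thesis using ce ec by auto
    next
      case False
      then have "e s0 = -1" using e2[OF s0] by simp
      then show ?thesis using ce ec by auto
    qed
  qed
  have bwd: "v_helix I v" if "\<exists>c. \<forall>s\<in>I. sigma_v G K T s = c"
  proof -
    from that obtain c0 where hc: "\<forall>s\<in>I. sigma_v G K T s = c0" by blast
    define k where "k = sqrt (1 + c0^2)"
    have kpos: "k > 0" unfolding k_def by (simp add: add_pos_nonneg)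
    define r where "r = (\<lambda>s. sqrt (\<rho> s))"
    define u where "u = (\<lambda>s. (T s / r s) *\<^sub>R xi s - (K s / r s) *\<^sub>R mu s)"
    define D where "D = (\<lambda>s. (c0/k) *\<^sub>R v s + (1/k) *\<^sub>R u s)"
    have dD: "(D has_vector_derivative 0) (at s)" if s: "s \<in> I" for s
    proof -
      have rp: "r s > 0" unfolding r_def using rpos[OF s] by simp
      have rr: "r s * r s = (T s)^2 + (K s)^2" unfolding r_def \<rho>_def using rpos[OF s] \<rho>_def by simp
      have drho: "(\<rho> has_real_derivative (2 * T s * deriv T s + 2 * K s * deriv K s)) (at s)"
        unfolding \<rho>_def
        by (rule deriv_val[OF DERIV_add[OF DERIV_power[OF dT[OF s]] DERIV_power[OF dK[OF s]]]]) simp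
      have dr: "(r has_real_derivative ((T s * deriv T s + K s * deriv K s) / r s)) (at s)"
        unfolding r_def
        by (rule deriv_val[OF DERIV_chain2[OF DERIV_real_sqrt[OF rpos[OF s]] drho]])
           (use rp in \<open>simp add: r_def field_simps\<close>)
      have dp: "((\<lambda>t. T t / r t) has_real_derivative
          (deriv T s * r s - T s * ((T s * deriv T s + K s * deriv K s) / r s)) / (r s * r s)) (at s)"
        using DERIV_divide[OF dT[OF s] dr] rp by simp
      have dq: "((\<lambda>t. K t / r t) has_real_derivative
          (deriv K s * r s - K s * ((T s * deriv T s + K s * deriv K s) / r s)) / (r s * r s)) (at s)"
        using DERIV_divide[OF dK[OF s] dr] rp by simp
      define p' where "p' = (deriv T s * r s - T s * ((T s * deriv T s + K s * deriv K s) / r s)) / (r s * r s)"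
      define q' where "q' = (deriv K s * r s - K s * ((T s * deriv T s + K s * deriv K s) / r s)) / (r s * r s)"
      have du: "(u has_vector_derivative
          ((T s / r s) *\<^sub>R (G s *\<^sub>R mu s + K s *\<^sub>R v s) + p' *\<^sub>R xi s)
          - ((K s / r s) *\<^sub>R (- G s *\<^sub>R xi s + T s *\<^sub>R v s) + q' *\<^sub>R mu s)) (at s)"
        unfolding u_def p'_def q'_def
        using has_vector_derivative_diff[OF has_vector_derivative_scaleR[OF dp] has_vector_derivative_scaleR[OF dq]]
          fr[OF s] by blast
      have dv: "(v has_vector_derivative (- K s *\<^sub>R xi s - T s *\<^sub>R mu s)) (at s)" using fr[OF s] by blast
      have dD0: "(D has_vector_derivative
          (c0/k) *\<^sub>R (- K s *\<^sub>R xi s - T s *\<^sub>R mu s) + (1/k) *\<^sub>R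
          (((T s / r s) *\<^sub>R (G s *\<^sub>R mu s + K s *\<^sub>R v s) + p' *\<^sub>R xi s)
          - ((K s / r s) *\<^sub>R (- G s *\<^sub>R xi s + T s *\<^sub>R v s) + q' *\<^sub>R mu s))) (at s)"
        unfolding D_def
        by (rule vderiv_val[OF has_vector_derivative_add[OF has_vector_derivative_scaleR[OF DERIV_const[of "c0/k"] dv]
             has_vector_derivative_scaleR[OF DERIV_const[of "1/k"] du]]]) simp
      have sg: "c0 * (r s * r s * r s) = deriv T s * K s - T s * deriv K s + r s * r s * G s"
      proof -
        have "c0 = N s / (\<rho> s * r s)" using hc s sig[OF s] unfolding r_def by simp
        then show ?thesis using rp unfolding N_def r_def using rpos[OF s] by (simp add: field_simps)
      qed
      note ba = bwd_alg[OF rp rr sg, folded p'_def q'_def]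
      have "(c0/k) *\<^sub>R (- K s *\<^sub>R xi s - T s *\<^sub>R mu s) + (1/k) *\<^sub>R
          (((T s / r s) *\<^sub>R (G s *\<^sub>R mu s + K s *\<^sub>R v s) + p' *\<^sub>R xi s)
          - ((K s / r s) *\<^sub>R (- G s *\<^sub>R xi s + T s *\<^sub>R v s) + q' *\<^sub>R mu s))
        = (1/k) *\<^sub>R ((p' + K s / r s * G s - c0 * K s) *\<^sub>R xi s + (T s / r s * G s - q' - c0 * T s) *\<^sub>R mu s
             + (T s / r s * K s - K s / r s * T s) *\<^sub>R v s)"
        using kpos by (simp add: algebra_simps)
      also have "\<dots> = 0" using ba by simp
      finally show ?thesis using dD0 by simp
    qed
    have cvx: "convex I" using assms(2) is_interval_convex by blast
    obtain dd where hd: "\<And>x. x \<in> I \<Longrightarrow> D x = dd"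
      using has_vector_derivative_zero_constant[OF cvx, of D] dD has_vector_derivative_at_within by blast
    obtain s0 where s0: "s0 \<in> I" using assms(3) by blast
    have uu: "u s \<bullet> u s = 1 \<and> v s \<bullet> u s = 0" if s: "s \<in> I" for s
    proof -
      have rp: "r s > 0" unfolding r_def using rpos[OF s] by simp
      have rr: "r s * r s = (T s)^2 + (K s)^2" unfolding r_def \<rho>_def using rpos[OF s] \<rho>_def by simp
      have n: "xi s \<bullet> xi s = 1" "mu s \<bullet> mu s = 1" using fr[OF s] orth[OF s] by (simp_all add: dot_square_norm)
      have "u s \<bullet> u s = ((T s)^2 + (K s)^2) / (r s * r s)"
        unfolding u_def using n orth[OF s] by (simp add: inner_diff_left inner_diff_right power2_eq_square add_divide_distrib)
      also have "\<dots> = 1" unfolding rr[symmetric] using rp by simp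
      finally show ?thesis unfolding u_def using fr[OF s] orth[OF s]
        by (simp add: inner_diff_right inner_commute)
    qed
    have nD: "norm dd = 1"
    proof -
      have vv: "v s0 \<bullet> v s0 = 1" using fr[OF s0] by (simp add: dot_square_norm)
      have "dd \<bullet> dd = (c0/k)^2 + (1/k)^2"
        unfolding hd[OF s0, symmetric] D_def using vv uu[OF s0]
        by (simp add: inner_add_left inner_add_right inner_commute power2_eq_square)
      also have "\<dots> = 1"
      proof -
        have c1: "1 + c0^2 > 0" by (simp add: add_pos_nonneg)
        then have k2: "k^2 = 1 + c0^2" unfolding k_def by simp
        show ?thesis using kpos c1 by (simp add: power_divide k2 add_divide_distrib[symmetric])
      qed
      finally show ?thesis by (simp add: norm_eq_1)
    qed
    have vD: "v s \<bullet> dd = c0 / k" if s: "s \<in> I" for s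
    proof -
      have vv: "v s \<bullet> v s = 1" using fr[OF s] by (simp add: dot_square_norm)
      show ?thesis unfolding hd[OF s, symmetric] D_def using vv uu[OF s] by (simp add: inner_add_right)
    qed
    have bnd: "\<bar>c0 / k\<bar> \<le> 1"
    proof -
      have "\<bar>c0\<bar> = sqrt (c0^2)" by simp
      also have "\<dots> \<le> k" unfolding k_def by (rule real_sqrt_le_mono) simp
      finally show ?thesis using kpos by simp
    qed
    have "v_helix_with I v dd (arccos (c0/k))"
      unfolding v_helix_with_def using nD vD bnd by (simp add: cos_arccos_abs)
    then show ?thesis unfolding v_helix_def by blast
  qed
  show ?thesis
  proof (intro conjI iffI allI impI)
    assume "v_helix I v"
    then obtain d \<omega> where H: "v_helix_with I v d \<omega>" unfolding v_helix_def by blast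
    from fwd[OF H] show "\<exists>c. \<forall>s\<in>I. sigma_v G K T s = c"
    proof
      assume "\<forall>s\<in>I. cot \<omega> = sigma_v G K T s"
      then show ?thesis by (metis)
    next
      assume "\<forall>s\<in>I. cot \<omega> = - sigma_v G K T s"
      then have "\<forall>s\<in>I. sigma_v G K T s = - cot \<omega>" by simp
      then show ?thesis by blast
    qed
  next
    assume "\<exists>c. \<forall>s\<in>I. sigma_v G K T s = c"
    then show "v_helix I v" by (rule bwd)
  next
    fix d \<omega> assume "v_helix_with I v d \<omega>"
    then show "(\<forall>s\<in>I. cot \<omega> = sigma_v G K T s) \<or> (\<forall>s\<in>I. cot \<omega> = - sigma_v G K T s)" by (rule fwd)
  qed
qed

end
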